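(* Let $a,b,k$ be positive integers with $\gcd(a,b)=1$. Define $a_1=a$, $a_2=b$, and $a_n=ka_{n-1}+a_{n-2}$ for $n\ge 3$. Let $(x_n)_{n\ge1}$ be the sequence $1,1,1,2,2,2,1,1,1,2,2,2,\ldots$ and $(y_n)_{n\ge1}$ the sequence $2,2,2,1,1,1,2,2,2,1,1,1,\ldots$ (blocks of three, alternating). (1) If $k$ is even, then the sequence $(\Gamma(a_n,a_{n+1}))_{n\ge1}$ is constant. (2) If $k$ is odd: (a) if $a$ and $b$ are both odd, then $(\Gamma(a_n,a_{n+1}))_{n\ge 3}$ equals $(x_n)_{n\ge1}$ or $(y_n)_{n\ge1}$; (b) if $a$ is odd and $b$ is even, then $(\Gamma(a_n,a_{n+1}))_{n\ge 2}$ equals $(x_n)_{n\ge1}$ or $(y_n)_{n\ge1}$; (c) if $a$ is even and $b$ is odd, then $(\Gamma(a_n,a_{n+1}))_{n\ge 1}$ equals $(x_n)_{n\ge1}$ or $(y_n)_{n\ge1}$.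
   Context: For relatively prime positive integers $p,q$, exactly one of the equations $px+qy=\frac{(p-1)(q-1)}{2}$ (Equation 1) and $px+qy+1=\frac{(p-1)(q-1)}{2}$ (Equation 2) has a solution in nonnegative integers $(x,y)$. For positive integers $a,b$ with $d=\gcd(a,b)$, $\Gamma(a,b)=1$ if Equation 1 with $(p,q)=(a/d,b/d)$ has a nonnegative integer solution, and $\Gamma(a,b)=2$ otherwise. A sequence indexed from $n\ge m$ "equals" $(x_n)_{n\ge1}$ means its $j$-th term (the one with index $n=m+j-1$) equals $x_j$ for all $j\ge1$. *)

theory Defs
  imports Main
begin

definition eq1_solvable :: "nat \<Rightarrow> nat \<Rightarrow> bool" where
  "eq1_solvable p q \<longleftrightarrow> (\<exists>x y::nat. p * x + q * y = ((p - 1) * (q - 1)) div 2)"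

definition Gamma :: "nat \<Rightarrow> nat \<Rightarrow> nat" where
  "Gamma a b = (let d = gcd a b in if eq1_solvable (a div d) (b div d) then 1 else 2)"

text \<open>seq0 a b k i is a_(i+1): a_1 = a, a_2 = b, a_n = k a_(n-1) + a_(n-2).\<close>
fun seq0 :: "nat \<Rightarrow> nat \<Rightarrow> nat \<Rightarrow> nat \<Rightarrow> nat" where
  "seq0 a b k 0 = a"
| "seq0 a b k (Suc 0) = b"
| "seq0 a b k (Suc (Suc i)) = k * seq0 a b k (Suc i) + seq0 a b k i"

definition recseq :: "nat \<Rightarrow> nat \<Rightarrow> nat \<Rightarrow> nat \<Rightarrow> nat" where
  "recseq a b k n = seq0 a b k (n - 1)"

definition xseq :: "nat \<Rightarrow> nat" where
  "xseq j = (if even ((j - 1) div 3) then 1 else 2)"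

definition yseq :: "nat \<Rightarrow> nat" where
  "yseq j = (if even ((j - 1) div 3) then 2 else 1)"

end

theory Submission
  imports Defs
begin

definition rep :: "nat \<Rightarrow> nat \<Rightarrow> nat \<Rightarrow> bool" where
  "rep p q n \<longleftrightarrow> (\<exists>x y. p * x + q * y = n)"

lemma excl:
  assumes cp: "coprime p q" and p: "p > 0" and q: "q > 0"
    and r1: "rep p q n" and r2: "rep p q m" and s: "n + m + p + q = p * q"
  shows False
proof -
  obtain x1 y1 where 1: "p*x1 + q*y1 = n" using r1 rep_def by auto
  obtain x2 y2 where 2: "p*x2 + q*y2 = m" using r2 rep_def by auto
  define X where "X = x1 + x2 + 1"
  define Y where "Y = y1 + y2 + 1"
  have e: "p*X + q*Y = p*q" using 1 2 s unfolding X_def Y_def by (simp add: algebra_simps)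
  have "p dvd q*Y" using e by (metis dvd_add_right_iff dvd_triv_left)
  then have "p dvd Y" using cp coprime_dvd_mult_right_iff by blast
  then have Yp: "Y \<ge> p" using Y_def by (simp add: dvd_imp_le)
  have "q dvd p*X" using e by (metis dvd_add_left_iff dvd_triv_left dvd_triv_right)
  then have "q dvd X" using cp coprime_dvd_mult_right_iff coprime_commute by blast
  then have Xq: "X \<ge> q" using X_def by (simp add: dvd_imp_le)
  have "p*X \<ge> p*q" using Xq by simp
  moreover have "q*Y \<ge> q*p" using Yp by simp
  ultimately have "p*X + q*Y \<ge> p*q + q*p" by (rule add_mono)
  with e p q show False by simp
qed

lemma exh:
  assumes cp: "coprime p q" and p: "p > 0" and q: "q > 0"
    and s: "n + m + p + q = p * q"
  shows "rep p q n \<or> rep p q m"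
proof -
  obtain u v where uv: "q * u = p * v + gcd q p" using bezout_nat[of q p] q by auto
  have g: "gcd q p = 1" using cp by (simp add: coprime_commute)
  define y where "y = (u * n) mod p"
  have yp: "y < p" using p y_def by simp
  have "(q*y) mod p = (q*(u*n)) mod p" unfolding y_def by (simp add: mod_mult_right_eq)
  also have "q*(u*n) = (p*v + 1)*n" using uv g by (simp add: mult.assoc[symmetric])
  also have "(p*v+1)*n = n + (v*n)*p" by (simp add: algebra_simps)
  also have "(n + (v*n)*p) mod p = n mod p" by (rule mod_mult_self1)
  finally have c: "(q*y) mod p = n mod p" .
  show ?thesis
  proof (cases "q*y \<le> n")
    case True
    have "p dvd (n - q*y)" using c True mod_eq_dvd_iff_nat[of "q*y" n p] by simp
    then obtain x where "n - q*y = p*x" by auto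
    then have "p*x + q*y = n" using True by simp
    then show ?thesis unfolding rep_def by blast
  next
    case False
    have "p dvd (q*y - n)" using c False by (metis less_or_eq_imp_le mod_eq_dvd_iff_nat nle_le)
    then obtain t where t: "q*y - n = p*t" by auto
    have tpos: "t \<ge> 1" using t False by (cases t) auto
    have "int (p*(t-1) + q*(p-1-y)) = int m"
    proof -
      have "int (p*(t-1) + q*(p-1-y)) = int p * (int t - 1) + int q * (int p - 1 - int y)"
        using tpos yp by (simp add: of_nat_diff)
      also have "\<dots> = int m"
      proof -
        have a1: "int q * int y - int n = int p * int t" using t False
          by (metis less_or_eq_imp_le nle_le of_nat_diff of_nat_mult)
        have a2: "int n + int m + int p + int q = int p * int q" using s
          by (metis of_nat_add of_nat_mult)
        show ?thesis using a1 a2 by (simp add: algebra_simps)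
      qed
      finally show ?thesis .
    qed
    then have "p*(t-1) + q*(p-1-y) = m" by linarith
    then show ?thesis unfolding rep_def by blast
  qed
qed

lemma odd_transfer:
  assumes "odd p" and r: "rep p q n" and b: "2*n \<le> (p-1)*(q-1)"
  shows "rep p (q+p) (n + p*((p-1) div 2))"
proof -
  obtain x y where e: "p*x + q*y = n" using r rep_def by auto
  have "2*(q*y) \<le> (p-1)*(q-1)" using e b by linarith
  also have "\<dots> \<le> (p-1)*q" by simp
  finally have "q*(2*y) \<le> q*(p-1)" by (simp add: algebra_simps)
  then have "2*y \<le> p - 1 \<or> q = 0" by auto
  show ?thesis
  proof (cases "q = 0")
    case True
    then have "n = p*x" using e by simp
    then have "p*(x + (p-1) div 2) + (q+p)*0 = n + p*((p-1) div 2)" by (simp add: algebra_simps)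
    then show ?thesis unfolding rep_def by blast
  next
    case False
    with \<open>2*y \<le> p - 1 \<or> q = 0\<close> have y: "y \<le> (p-1) div 2" by auto
    define c where "c = (p-1) div 2"
    have pc: "p*(c-y) + p*y = p*c" using y unfolding c_def by (metis add_mult_distrib2 le_add_diff_inverse2)
    have "p*(x + (c - y)) + (q+p)*y = p*x + (p*(c-y) + p*y) + q*y" by (simp add: algebra_simps)
    also have "\<dots> = n + p*((p-1) div 2)" using e pc unfolding c_def by simp
    finally show ?thesis unfolding rep_def c_def using y by (metis Nat.add_diff_assoc)
  qed
qed

lemma even_notboth:
  assumes "even p" and p: "p > 0" and q: "q > 0" and cp: "coprime p q" and r: "rep p q n"
    and r2: "rep p (q+p) (n + p*(p-1) div 2)" and b: "2*n \<le> (p-1)*(q-1)"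
  shows False
proof -
  obtain h where ph: "p = 2*h" using assms(1) by auto
  have h: "h > 0" using p ph by simp
  obtain x y where e: "p*x + q*y = n" using r rep_def by auto
  obtain x' y' where e2: "p*x' + (q+p)*y' = n + p*(p-1) div 2" using r2 rep_def by auto
  have D: "p*(p-1) div 2 = h*(2*h-1)" using ph by simp
  have "2*(q*y) \<le> (p-1)*(q-1)" using e b by linarith
  also have "\<dots> < p*q" using p q by (cases q) (auto simp: algebra_simps)
  finally have "q*(2*y) < q*(2*h)" using ph by (simp add: algebra_simps)
  then have yh: "y < h" by simp
  have "2*((q+p)*y') \<le> 2*n + 2*(h*(2*h-1))" using e2 D by linarith
  also have "\<dots> \<le> (p-1)*(q-1) + p*(p-1)" using b ph by simp
  also have "\<dots> = (p-1)*((q-1)+p)" by (simp add: algebra_simps)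
  also have "\<dots> = (p-1)*(q+p-1)" using q by simp
  also have "\<dots> \<le> (p-1)*(q+p)" by simp
  also have "\<dots> < p*(q+p)" using p q by simp
  finally have "(q+p)*(2*y') < (q+p)*(2*h)" using ph by (simp add: algebra_simps)
  then have yh2: "y' < h" by simp
  have E: "int q * (int y' - int y) = int h * (2*int h - 1) + 2 * int h * (int x - int x' - int y')"
  proof -
    have a: "int p * int x + int q * int y = int n" using e by (metis of_nat_add of_nat_mult)
    have b: "int p * int x' + (int q + int p) * int y' = int n + int h * (2 * int h - 1)"
    proof -
      have "int (n + p*(p-1) div 2) = int n + int h * (2 * int h - 1)" using D h by (simp add: of_nat_diff)
      with e2 show ?thesis by (metis of_nat_add of_nat_mult)
    qed
    show ?thesis using a b ph by (simp add: algebra_simps)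
  qed
  have "int q * (int y' - int y) = int h * ((2*int h - 1) + 2 * (int x - int x' - int y'))"
    using E by (simp add: algebra_simps)
  then have "int h dvd int q * (int y' - int y)" by (metis dvdI)
  moreover have "coprime (int h) (int q)" using cp ph by simp
  ultimately have "int h dvd (int y' - int y)" using coprime_dvd_mult_right_iff by blast
  moreover have "\<bar>int y' - int y\<bar> < int h" using yh yh2 by linarith
  ultimately have "int y' - int y = 0"
  proof -
    assume d: "int h dvd (int y' - int y)" and l: "\<bar>int y' - int y\<bar> < int h"
    show ?thesis
    proof (rule ccontr)
      assume "int y' - int y \<noteq> 0"
      then have "\<bar>int h\<bar> \<le> \<bar>int y' - int y\<bar>" using d dvd_imp_le_int by blast
      with l show False by simp
    qed
  qed
  then have "0 = int h * ((2*int h - 1) + 2 * (int x - int x' - int y'))" using E by (simp add: algebra_simps)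
  then have "(2*int h - 1) + 2 * (int x - int x' - int y') = 0" using h by simp
  then show False by presburger
qed

lemma eq1_rep: "eq1_solvable p q = rep p q ((p-1)*(q-1) div 2)"
  unfolding eq1_solvable_def rep_def by simp

lemma two_N:
  fixes p q :: nat
  assumes "coprime p q" shows "2*((p-1)*(q-1) div 2) = (p-1)*(q-1)"
proof -
  have "odd p \<or> odd q"
  proof (rule ccontr)
    assume "\<not> (odd p \<or> odd q)"
    then have "2 dvd p" "2 dvd q" by auto
    then have "2 dvd gcd p q" by simp
    with assms show False by simp
  qed
  then have "even ((p-1)*(q-1))" by auto
  then show ?thesis by simp
qed

lemma exactly_one:
  assumes cp: "coprime p q" and p: "p > 0" and q: "q > 0"
  defines "N \<equiv> (p-1)*(q-1) div 2"
  shows "N = 0 \<Longrightarrow> rep p q N" and "N \<ge> 1 \<Longrightarrow> rep p q N \<longleftrightarrow> \<not> rep p q (N-1)"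
proof -
  show "N = 0 \<Longrightarrow> rep p q N" unfolding rep_def by auto
  assume N1: "N \<ge> 1"
  have tn: "2*N = (p-1)*(q-1)" using two_N[OF cp] N_def by simp
  have s: "N + (N-1) + p + q = p*q"
  proof -
    have "int (N + (N-1) + p + q) = 2 * int N - 1 + int p + int q" using N1 by (simp add: of_nat_diff)
    also have "\<dots> = (int p - 1)*(int q - 1) - 1 + int p + int q"
    proof -
      have "int (2*N) = int ((p-1)*(q-1))" using tn by simp
      then have "2 * int N = (int p - 1)*(int q - 1)" using p q by (simp add: of_nat_diff)
      then show ?thesis by simp
    qed
    also have "\<dots> = int (p*q)" by (simp add: algebra_simps)
    finally show ?thesis by linarith
  qed
  show "rep p q N \<longleftrightarrow> \<not> rep p q (N-1)"
    using excl[OF cp p q _ _ s] exh[OF cp p q s] by blast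
qed

lemma step:
  assumes cp: "coprime p q" and p: "p > 0" and q: "q > 0"
  shows "eq1_solvable p (q+p) = (if odd p then eq1_solvable p q else \<not> eq1_solvable p q)"
proof -
  define N where "N = (p-1)*(q-1) div 2"
  define N' where "N' = (p-1)*(q+p-1) div 2"
  define D where "D = p*(p-1) div 2"
  have cp': "coprime p (q+p)" using cp gcd_add2[of p q] by (simp add: coprime_iff_gcd_eq_1 add.commute)
  have q': "q + p > 0" using q by simp
  have tn: "2*N = (p-1)*(q-1)" using two_N[OF cp] N_def by simp
  have tn': "2*N' = (p-1)*(q+p-1)" using two_N[OF cp'] N'_def by simp
  have "(p-1)*(q+p-1) = (p-1)*((q-1)+p)" using q by simp
  also have "\<dots> = (p-1)*(q-1) + p*(p-1)" by (simp add: algebra_simps)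
  finally have "(p-1)*(q+p-1) = (p-1)*(q-1) + p*(p-1)" .
  moreover have "even (p*(p-1))" by (cases "even p") auto
  then have "2*D = p*(p-1)" unfolding D_def by simp
  ultimately have ND: "N' = N + D" using tn tn' by linarith
  have E1: "eq1_solvable p q = rep p q N" using eq1_rep N_def by simp
  have E2: "eq1_solvable p (q+p) = rep p (q+p) N'" using eq1_rep N'_def by simp
  note X = exactly_one[OF cp p q, folded N_def]
  note X' = exactly_one[OF cp' p q', folded N'_def]
  show ?thesis
  proof (cases "odd p")
    case True
    have "even (p-1)" using True by simp
    then have DD: "D = p*((p-1) div 2)" unfolding D_def by (simp add: div_mult_swap)
    have "rep p q N \<longleftrightarrow> rep p (q+p) N'"
    proof
      assume "rep p q N"
      then show "rep p (q+p) N'" using odd_transfer[OF True _ ] tn ND DD by simp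
    next
      assume r': "rep p (q+p) N'"
      show "rep p q N"
      proof (rule ccontr)
        assume nr: "\<not> rep p q N"
        then have N1: "N \<ge> 1" using X(1) by fastforce
        then have "rep p q (N-1)" using X(2) nr by blast
        moreover have "2*(N-1) \<le> (p-1)*(q-1)" using tn by simp
        ultimately have "rep p (q+p) (N-1 + D)" using odd_transfer[OF True] DD by simp
        moreover have "N - 1 + D = N' - 1" using ND N1 by simp
        moreover have "N' \<ge> 1" using ND N1 by simp
        ultimately show False using X'(2) r' by auto
      qed
    qed
    then show ?thesis using True E1 E2 by simp
  next
    case False
    have DD: "D = p*(p-1) div 2" using D_def by simp
    have "rep p q N \<longleftrightarrow> \<not> rep p (q+p) N'"
    proof
      assume "rep p q N"
      then show "\<not> rep p (q+p) N'" using even_notboth[OF _ p q cp, of N] False tn ND DD by auto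
    next
      assume nr': "\<not> rep p (q+p) N'"
      show "rep p q N"
      proof (rule ccontr)
        assume nr: "\<not> rep p q N"
        then have N1: "N \<ge> 1" using X(1) by fastforce
        then have r1: "rep p q (N-1)" using X(2) nr by blast
        have N1': "N' \<ge> 1" using ND N1 by simp
        then have "rep p (q+p) (N'-1)" using X'(2) nr' by blast
        moreover have "N - 1 + D = N' - 1" using ND N1 by simp
        ultimately have "rep p (q+p) (N-1 + p*(p-1) div 2)" using DD by simp
        moreover have "2*(N-1) \<le> (p-1)*(q-1)" using tn by simp
        ultimately show False using even_notboth[OF _ p q cp r1] False by auto
      qed
    qed
    then show ?thesis using False E1 E2 by auto
  qed
qed

lemma eq1_sym: "eq1_solvable p q = eq1_solvable q p"
  unfolding eq1_solvable_def by (metis add.commute mult.commute)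

lemma coprime_addk: "coprime (p::nat) (q + k*p) = coprime p q"
  by (metis add.commute coprime_iff_gcd_eq_1 gcd_add_mult)

lemma stepk:
  assumes cp: "coprime p q" and p: "p > 0" and q: "q > 0"
  shows "eq1_solvable p (q + k*p) = (if odd p \<or> even k then eq1_solvable p q else \<not> eq1_solvable p q)"
proof (induction k)
  case 0
  then show ?case by simp
next
  case (Suc k)
  have "eq1_solvable p (q + Suc k * p) = eq1_solvable p ((q + k*p) + p)" by (simp add: algebra_simps)
  also have "\<dots> = (if odd p then eq1_solvable p (q + k*p) else \<not> eq1_solvable p (q + k*p))"
    using step[of p "q + k*p"] cp p q coprime_addk by simp
  finally show ?case using Suc.IH by auto
qed

lemma seq_pos: "a > 0 \<Longrightarrow> b > 0 \<Longrightarrow> seq0 a b k i > 0"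
  by (induction a b k i rule: seq0.induct) auto

lemma seq_cop: "coprime a b \<Longrightarrow> coprime (seq0 a b k i) (seq0 a b k (Suc i))"
proof (induction i)
  case 0 then show ?case by simp
next
  case (Suc i)
  have "coprime (seq0 a b k (Suc i)) (seq0 a b k i + k * seq0 a b k (Suc i))"
    using Suc coprime_addk coprime_commute by blast
  then show ?case by (simp add: add.commute)
qed

lemma seq_par:
  assumes "odd k" and r: "r < 3" and h0: "even (seq0 a b k 0) \<longleftrightarrow> r = 0"
    and h1: "even (seq0 a b k 1) \<longleftrightarrow> r = 1"
  shows "(even (seq0 a b k i) \<longleftrightarrow> i mod 3 = r) \<and> (even (seq0 a b k (Suc i)) \<longleftrightarrow> Suc i mod 3 = r)"
proof (induction i)
  case 0 then show ?case using h0 h1 r by auto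
next
  case (Suc i)
  have "even (seq0 a b k (Suc (Suc i))) \<longleftrightarrow> (even (seq0 a b k (Suc i)) \<longleftrightarrow> even (seq0 a b k i))"
    using assms(1) by simp
  moreover have "(Suc (Suc i) mod 3 = r) \<longleftrightarrow> ((Suc i mod 3 = r) \<longleftrightarrow> (i mod 3 = r))"
    using r by (cases "i mod 3 = 0"; cases "i mod 3 = 1"; cases "r = 0"; cases "r = 1"; simp add: mod_Suc)
  ultimately show ?case using Suc by simp
qed

lemma Gamma_cop: "coprime x y \<Longrightarrow> Gamma x y = (if eq1_solvable x y then 1 else 2)"
  unfolding Gamma_def by (simp add: coprime_iff_gcd_eq_1)

lemma flip_lemma:
  fixes H :: "nat \<Rightarrow> nat"
  assumes "\<And>i. H (Suc i) = (if Suc i mod 3 = r then 3 - H i else H i)" and r: "r < 3"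
    and "\<And>i. H i \<in> {1,2}"
  shows "H (j + r) = (if even (j div 3) then H r else 3 - H r)"
proof (induction j)
  case 0 then show ?case by simp
next
  case (Suc j)
  have e: "H (Suc j + r) = (if Suc j mod 3 = 0 then 3 - H (j + r) else H (j + r))"
  proof -
    have "(Suc (j+r) mod 3 = r) \<longleftrightarrow> (Suc j mod 3 = 0)" using r by presburger
    then show ?thesis using assms(1)[of "j + r"] by simp
  qed
  have hr: "H r \<in> {1,2}" using assms(3) by simp
  show ?case
  proof (cases "Suc j mod 3 = 0")
    case True
    then have "even (Suc j div 3) \<longleftrightarrow> \<not> even (j div 3)" by presburger
    then show ?thesis using e Suc True hr by auto
  next
    case False
    then have "Suc j div 3 = j div 3" by presburger
    then show ?thesis using e Suc False by auto
  qed
qed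

theorem theorem5p2:
  fixes a b k :: nat
  assumes "a > 0" and "b > 0" and "k > 0" and "coprime a b"
  defines "G \<equiv> (\<lambda>n. Gamma (recseq a b k n) (recseq a b k (n + 1)))"
  shows "(even k \<longrightarrow> (\<exists>c. \<forall>n\<ge>1. G n = c))
       \<and> (odd k \<longrightarrow>
           (odd a \<and> odd b \<longrightarrow>
              (\<forall>j\<ge>1. G (j + 2) = xseq j) \<or> (\<forall>j\<ge>1. G (j + 2) = yseq j))
         \<and> (odd a \<and> even b \<longrightarrow>
              (\<forall>j\<ge>1. G (j + 1) = xseq j) \<or> (\<forall>j\<ge>1. G (j + 1) = yseq j))
         \<and> (even a \<and> odd b \<longrightarrow>
              (\<forall>j\<ge>1. G j = xseq j) \<or> (\<forall>j\<ge>1. G j = yseq j)))"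
proof -
  define s where "s = seq0 a b k"
  define H where "H i = Gamma (s i) (s (Suc i))" for i
  have GH: "G n = H (n - 1)" if "n \<ge> 1" for n
    unfolding G_def H_def s_def recseq_def using that by (simp add: Suc_diff_le[symmetric])
  have pos: "s i > 0" for i unfolding s_def using seq_pos assms(1,2) by blast
  have cop: "coprime (s i) (s (Suc i))" for i unfolding s_def using seq_cop assms(4) by blast
  have Hv: "H i = (if eq1_solvable (s i) (s (Suc i)) then 1 else 2)" for i
    unfolding H_def using Gamma_cop cop by blast
  have H12: "H i \<in> {1,2}" for i using Hv by simp
  have HS: "H (Suc i) = (if odd (s (Suc i)) \<or> even k then H i else 3 - H i)" for i
  proof -
    have ss: "s (Suc (Suc i)) = s i + k * s (Suc i)" unfolding s_def by simp
    have c1: "coprime (s (Suc i)) (s i)" using cop[of i] coprime_commute by blast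
    have "eq1_solvable (s (Suc i)) (s (Suc (Suc i))) =
      (if odd (s (Suc i)) \<or> even k then eq1_solvable (s (Suc i)) (s i) else \<not> eq1_solvable (s (Suc i)) (s i))"
      unfolding ss using stepk[OF c1 pos pos] by simp
    then show ?thesis using Hv[of "Suc i"] Hv[of i] eq1_sym[of "s (Suc i)" "s i"] by auto
  qed
  have part1: "even k \<longrightarrow> (\<exists>c. \<forall>n\<ge>1. G n = c)"
  proof
    assume ek: "even k"
    have "H i = H 0" for i using HS ek by (induction i) auto
    then show "\<exists>c. \<forall>n\<ge>1. G n = c" using GH by auto
  qed
  have gen: "(\<forall>j\<ge>1. G (j + r) = xseq j) \<or> (\<forall>j\<ge>1. G (j + r) = yseq j)"
    if ok: "odd k" and r: "r < 3" and h0: "even a \<longleftrightarrow> r = 0" and h1: "even b \<longleftrightarrow> r = 1" for r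
  proof -
    have par: "even (s i) \<longleftrightarrow> i mod 3 = r" for i
      using seq_par[OF ok r, of a b i] h0 h1 unfolding s_def by simp
    have HS': "H (Suc i) = (if Suc i mod 3 = r then 3 - H i else H i)" for i
      using HS[of i] par[of "Suc i"] ok by auto
    have F: "H (j + r) = (if even (j div 3) then H r else 3 - H r)" for j
      using flip_lemma[OF HS' r H12] by blast
    have GJ: "G (j + r) = (if even ((j - 1) div 3) then H r else 3 - H r)" if "j \<ge> 1" for j
    proof -
      have "G (j + r) = H ((j - 1) + r)" using GH[of "j + r"] that by simp
      then show ?thesis using F[of "j - 1"] by simp
    qed
    show ?thesis
    proof (cases "H r = 1")
      case True
      then have "\<forall>j\<ge>1. G (j + r) = xseq j" using GJ unfolding xseq_def by auto
      then show ?thesis by blast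
    next
      case False
      then have "H r = 2" using H12[of r] by auto
      then have "\<forall>j\<ge>1. G (j + r) = yseq j" using GJ unfolding yseq_def by auto
      then show ?thesis by blast
    qed
  qed
  have sa: "s 0 = a" "s 1 = b" unfolding s_def by auto
  show ?thesis
  proof (intro conjI impI)
    assume "even k"
    then show "\<exists>c. \<forall>n\<ge>1. G n = c" using part1 by blast
  next
    assume "odd k" "odd a \<and> odd b"
    then show "(\<forall>j\<ge>1. G (j + 2) = xseq j) \<or> (\<forall>j\<ge>1. G (j + 2) = yseq j)"
      using gen[of 2] by auto
  next
    assume "odd k" "odd a \<and> even b"
    then show "(\<forall>j\<ge>1. G (j + 1) = xseq j) \<or> (\<forall>j\<ge>1. G (j + 1) = yseq j)"
      using gen[of 1] by auto
  next
    assume "odd k" "even a \<and> odd b"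
    then show "(\<forall>j\<ge>1. G j = xseq j) \<or> (\<forall>j\<ge>1. G j = yseq j)"
      using gen[of 0] by auto
  qed
qed

end
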